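(* Consider the infinite hydrodynamic chain (with $\partial=\partial_x$) $$\partial_{t_2}u^{-k}=\big(k\,u^{-(k+1)}-(k-2)u^{-(k-1)}+u^{-k}u^1\big)\partial u^0+u^0u^{-k}\partial u^1+u^0\big(\partial u^{-(k-1)}+\partial u^{-(k+1)}\big),\quad k>2,$$ $$\partial_{t_2}u^{-2}=\big(u^{-2}u^1+2u^{-3}\big)\partial u^0+u^0u^{-2}\partial u^1+u^0\partial u^{-3}+2u^0\partial u^{-1},$$ $$\partial_{t_2}u^{-1}=\big(u^{-1}u^1+u^{-2}\big)\partial u^0+u^0u^{-1}\partial u^1+u^0\partial u^{-2},$$ $$\partial_{t_2}u^0=u^0u^1\partial u^0+(u^0)^2\partial u^1,$$ $$\partial_{t_2}u^1=\big(2u^2-(u^1)^2\big)\partial u^0-u^0u^1\partial u^1+u^0\partial u^2,$$ $$\partial_{t_2}u^k=\big((k+1)u^{k+1}-(k-1)u^{k-1}-u^ku^1\big)\partial u^0-u^0u^k\partial u^1+u^0\big(\partial u^{k+1}+\partial u^{k-1}\big),\quad k>1,$$ for functions $u^\ell(x,\mathbf{t})$, with initial condition $u^{-k}(x,\mathbf{0})=0$ ($k>1$), $u^{-1}(x,\mathbf{0})=\tfrac12$, $u^0(x,\mathbf{0})=x$, $u^k(x,\mathbf{0})=2$ ($k>0$). If $u^{-k}(x,\mathbf{t})\equiv0$ for all $k>2$, then there exists a reduction of the chain, compatible with this initial condition, of the form $$u^{-2}(x,\mathbf{t})=0,\quad u^{-1}(x,\mathbf{t})=u^{-1}(\mathbf{t}),\quad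 u^0(x,\mathbf{t})=2x\,u^{-1}(\mathbf{t}),\quad u^k(x,\mathbf{t})=u^k(\mathbf{t})\ (k>0),$$ where the functions $u^{-1}(\mathbf{t})$, $u^k(\mathbf{t})$ ($k>0$) solve $$\partial_{t_2}u^{-1}=2(u^{-1})^2u^1,\qquad \partial_{t_2}u^k=2u^{-1}\big((k+1)u^{k+1}-u^1u^k-(k-1)u^{k-1}\big),\quad k>0.$$
   Context: $\mathbf{t}=(t_2,t_4,\dots)$ denotes the even coupling constants; $x\in\mathbb{R}$. *)

theory Defs
  imports "HOL-Analysis.Analysis"
begin

text \<open>Times: t :: nat \<Rightarrow> real, with t 0 = t_2, t 1 = t_4, ...\<close>

type_synonym field = "int \<Rightarrow> real \<Rightarrow> (nat \<Rightarrow> real) \<Rightarrow> real"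

definition zero_time :: "nat \<Rightarrow> real" where
  "zero_time = (\<lambda>_. 0)"

definition pdx :: "field \<Rightarrow> int \<Rightarrow> real \<Rightarrow> (nat \<Rightarrow> real) \<Rightarrow> real" where
  "pdx u l x t = deriv (\<lambda>y. u l y t) x"

definition pdt2 :: "((nat \<Rightarrow> real) \<Rightarrow> real) \<Rightarrow> (nat \<Rightarrow> real) \<Rightarrow> real" where
  "pdt2 f t = deriv (\<lambda>s. f (t(0 := s))) (t 0)"

definition t2_differentiable :: "((nat \<Rightarrow> real) \<Rightarrow> real) \<Rightarrow> bool" where
  "t2_differentiable f \<longleftrightarrow> (\<forall>t. (\<lambda>s. f (t(0 := s))) differentiable (at (t 0)))"

definition chain_solution :: "field \<Rightarrow> bool" where
  "chain_solution u \<longleftrightarrow>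
    (\<forall>l x t. (\<lambda>y. u l y t) differentiable (at x)) \<and>
    (\<forall>l x. t2_differentiable (u l x)) \<and>
    (\<forall>x t.
      let U = (\<lambda>l. u l x t); X = (\<lambda>l. pdx u l x t); T = (\<lambda>l. pdt2 (u l x) t) in
      (\<forall>k::int. k > 2 \<longrightarrow>
         T (-k) = (of_int k * U (-(k+1)) - of_int (k-2) * U (-(k-1)) + U (-k) * U 1) * X 0
                  + U 0 * U (-k) * X 1 + U 0 * (X (-(k-1)) + X (-(k+1)))) \<and>
      T (-2) = (U (-2) * U 1 + 2 * U (-3)) * X 0 + U 0 * U (-2) * X 1 + U 0 * X (-3)
               + 2 * U 0 * X (-1) \<and>
      T (-1) = (U (-1) * U 1 + U (-2)) * X 0 + U 0 * U (-1) * X 1 + U 0 * X (-2) \<and>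
      T 0 = U 0 * U 1 * X 0 + (U 0)^2 * X 1 \<and>
      T 1 = (2 * U 2 - (U 1)^2) * X 0 - U 0 * U 1 * X 1 + U 0 * X 2 \<and>
      (\<forall>k::int. k > 1 \<longrightarrow>
         T k = (of_int (k+1) * U (k+1) - of_int (k-1) * U (k-1) - U k * U 1) * X 0
               - U 0 * U k * X 1 + U 0 * (X (k+1) + X (k-1))))"

definition chain_initial :: "field \<Rightarrow> bool" where
  "chain_initial u \<longleftrightarrow> (\<forall>x.
     (\<forall>k::int. k > 1 \<longrightarrow> u (-k) x zero_time = 0) \<and>
     u (-1) x zero_time = 1/2 \<and>
     u 0 x zero_time = x \<and>
     (\<forall>k::int. k > 0 \<longrightarrow> u k x zero_time = 2))"

text \<open>The reduction ansatz: a t = u^{-1}(t), b k t = u^k(t) for k > 0 (b 0 is unused).\<close>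
definition reduction :: "((nat \<Rightarrow> real) \<Rightarrow> real) \<Rightarrow> (nat \<Rightarrow> (nat \<Rightarrow> real) \<Rightarrow> real) \<Rightarrow> field" where
  "reduction a b = (\<lambda>l x t.
     if l \<le> -2 then 0
     else if l = -1 then a t
     else if l = 0 then 2 * x * a t
     else b (nat l) t)"

definition reduced_system :: "((nat \<Rightarrow> real) \<Rightarrow> real) \<Rightarrow> (nat \<Rightarrow> (nat \<Rightarrow> real) \<Rightarrow> real) \<Rightarrow> bool" where
  "reduced_system a b \<longleftrightarrow>
     t2_differentiable a \<and> (\<forall>k>0. t2_differentiable (b k)) \<and>
     (\<forall>t. pdt2 a t = 2 * (a t)^2 * b 1 t) \<and>
     (\<forall>k>0. \<forall>t. pdt2 (b k) t =
        2 * a t * (real (k+1) * b (k+1) t - b 1 t * b k t - real (k-1) * b (k-1) t))"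

end

theory Submission
  imports Defs
begin

lemma pdx_red: "pdx (reduction a b) l x t = (if l = 0 then 2 * a t else 0)"
proof -
  have "((\<lambda>y. reduction a b l y t) has_real_derivative (if l = 0 then 2 * a t else 0)) (at x)"
  proof (cases "l = 0")
    case True
    have "((\<lambda>y. 2 * y * a t) has_real_derivative 2 * 1 * a t) (at x)"
      by (intro derivative_eq_intros) auto
    then show ?thesis using True by (simp add: reduction_def)
  next
    case False
    have "(\<lambda>y. reduction a b l y t) = (\<lambda>y. reduction a b l 0 t)"
      using False by (auto simp: reduction_def)
    then show ?thesis using False by simp
  qed
  then show ?thesis unfolding pdx_def by (rule DERIV_imp_deriv)
qed

lemma xdiff_red: "(\<lambda>y. reduction a b l y t) differentiable (at x)"
proof (cases "l = 0")
  case True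
  have "((\<lambda>y. 2 * y * a t) has_real_derivative 2 * 1 * a t) (at x)"
    by (intro derivative_eq_intros) auto
  then show ?thesis using True by (auto simp: reduction_def real_differentiable_def)
next
  case False
  have "(\<lambda>y. reduction a b l y t) = (\<lambda>y. reduction a b l 0 t)"
    using False by (auto simp: reduction_def)
  then show ?thesis by simp
qed

lemma pdt2_const0: "pdt2 (\<lambda>t. 0) t = 0"
  unfolding pdt2_def by simp

lemma pdt2_cmult:
  assumes "t2_differentiable f"
  shows "pdt2 (\<lambda>t. c * f t) t = c * pdt2 f t"
proof -
  have "(\<lambda>s. f (t(0 := s))) differentiable (at (t 0))" using assms t2_differentiable_def by blast
  then have "((\<lambda>s. f (t(0 := s))) has_real_derivative deriv (\<lambda>s. f (t(0 := s))) (t 0)) (at (t 0))"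
    using DERIV_deriv_iff_real_differentiable by blast
  then have "((\<lambda>s. c * f (t(0 := s))) has_real_derivative c * deriv (\<lambda>s. f (t(0 := s))) (t 0)) (at (t 0))"
    by (rule DERIV_cmult)
  then show ?thesis unfolding pdt2_def by (rule DERIV_imp_deriv)
qed

lemma t2d_cmult: "t2_differentiable f \<Longrightarrow> t2_differentiable (\<lambda>t. c * f t)"
  unfolding t2_differentiable_def by (auto intro: derivative_intros)

lemma t2d_const0: "t2_differentiable (\<lambda>t. 0)"
  unfolding t2_differentiable_def by simp

lemma red_pt: "reduction a b l x t = (if l \<le> -2 then 0 else if l = -1 then a t
     else if l = 0 then 2 * x * a t else b (nat l) t)"
  by (simp add: reduction_def)

lemma red_le: "l \<le> -2 \<Longrightarrow> reduction a b l x = (\<lambda>t. 0)"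
  by (auto simp: reduction_def fun_eq_iff)
lemma red_m1: "reduction a b (-1) x = a"
  by (auto simp: reduction_def fun_eq_iff)
lemma red_0: "reduction a b 0 x = (\<lambda>t. 2 * x * a t)"
  by (auto simp: reduction_def fun_eq_iff)
lemma red_pos: "l \<ge> 1 \<Longrightarrow> reduction a b l x = b (nat l)"
  by (auto simp: reduction_def fun_eq_iff)

theorem theorem5p2:
  fixes a :: "(nat \<Rightarrow> real) \<Rightarrow> real" and b :: "nat \<Rightarrow> (nat \<Rightarrow> real) \<Rightarrow> real"
  shows "(chain_solution (reduction a b) \<longleftrightarrow> reduced_system a b) \<and>
         (chain_initial (reduction a b) \<longleftrightarrow>
            a zero_time = 1/2 \<and> (\<forall>k>0. b k zero_time = 2))"
proof
  show "chain_solution (reduction a b) \<longleftrightarrow> reduced_system a b"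
  proof
    assume cs: "chain_solution (reduction a b)"
    have "t2_differentiable (reduction a b (-1) 0)" using cs unfolding chain_solution_def by blast
    then have ta: "t2_differentiable a" by (simp add: red_m1)
    have tb: "t2_differentiable (b k)" if "k > 0" for k
    proof -
      have "t2_differentiable (reduction a b (int k) 0)" using cs unfolding chain_solution_def by blast
      then show ?thesis using red_pos[of "int k" a b 0] that by simp
    qed
    note eqs = cs[unfolded chain_solution_def, THEN conjunct2, THEN conjunct2, rule_format]
    have e1: "pdt2 a t = 2 * (a t)^2 * b 1 t" for t
      using eqs[of 0 t] by (simp add: Let_def pdx_red red_m1 red_pt power2_eq_square)
    have e2: "pdt2 (b 1) t = 2 * a t * (2 * b 2 t - b 1 t * b 1 t)" for t
      using eqs[of 0 t] by (simp add: Let_def pdx_red red_pos red_pt power2_eq_square)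
    have e3: "pdt2 (b k) t = 2 * a t * (real (k+1) * b (k+1) t - b 1 t * b k t - real (k-1) * b (k-1) t)"
      if "k > 1" for k t
    proof -
      have "\<forall>k::int. k > 1 \<longrightarrow> pdt2 (reduction a b k 0) t =
         (of_int (k+1) * reduction a b (k+1) 0 t - of_int (k-1) * reduction a b (k-1) 0 t
           - reduction a b k 0 t * reduction a b 1 0 t) * (2 * a t)"
        using eqs[of 0 t] by (simp add: Let_def pdx_red red_0)
      then have h: "pdt2 (reduction a b (int k) 0) t =
         (of_int (int k+1) * reduction a b (int k+1) 0 t - of_int (int k-1) * reduction a b (int k-1) 0 t
           - reduction a b (int k) 0 t * reduction a b 1 0 t) * (2 * a t)"
        using that by simp
      have r1: "reduction a b (int k) 0 = b k" using red_pos[of "int k"] that by simp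
      have r2: "reduction a b (int k + 1) 0 t = b (k+1) t" using red_pos[of "int k + 1"] that
        by (simp add: nat_add_distrib)
      have r3: "reduction a b (int k - 1) 0 t = b (k-1) t" using red_pos[of "int k - 1"] that
        by (simp add: nat_diff_distrib)
      have r4: "reduction a b 1 0 t = b 1 t" using red_pos[of 1] by simp
      have r5: "(of_int (int k - 1)::real) = real (k - 1)" using that by (simp add: of_nat_diff)
      have r6: "(of_int (int k + 1)::real) = real (k + 1)" by simp
      have "pdt2 (b k) t = (real (k+1) * b (k+1) t - real (k-1) * b (k-1) t - b k t * b 1 t) * (2 * a t)"
        using h unfolding r1 r2 r3 r4 r5 r6 .
      also have "\<dots> = 2 * a t * (real (k+1) * b (k+1) t - b 1 t * b k t - real (k-1) * b (k-1) t)"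
        by algebra
      finally show ?thesis .
    qed
    show "reduced_system a b"
      unfolding reduced_system_def
    proof (intro conjI allI impI)
      show "t2_differentiable a" by (rule ta)
    next
      fix k :: nat assume "k > 0" then show "t2_differentiable (b k)" by (rule tb)
    next
      fix t show "pdt2 a t = 2 * (a t)^2 * b 1 t" by (rule e1)
    next
      fix k :: nat and t assume k: "k > 0"
      show "pdt2 (b k) t = 2 * a t * (real (k+1) * b (k+1) t - b 1 t * b k t - real (k-1) * b (k-1) t)"
      proof (cases "k = 1")
        case True then show ?thesis using e2[of t] by (simp add: numeral_2_eq_2)
      next
        case False then show ?thesis using e3[of k t] k by simp
      qed
    qed
  next
    assume rs: "reduced_system a b"
    have ta: "t2_differentiable a" and tb: "\<And>k. k > 0 \<Longrightarrow> t2_differentiable (b k)"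
      and e1: "\<And>t. pdt2 a t = 2 * (a t)^2 * b 1 t"
      and e3: "\<And>k t. k > 0 \<Longrightarrow> pdt2 (b k) t =
        2 * a t * (real (k+1) * b (k+1) t - b 1 t * b k t - real (k-1) * b (k-1) t)"
      using rs unfolding reduced_system_def by auto
    have td: "t2_differentiable (reduction a b l x)" for l x
    proof -
      consider "l \<le> -2" | "l = -1" | "l = 0" | "l \<ge> 1" by linarith
      then show ?thesis
      proof cases
        case 1 then show ?thesis by (simp add: red_le t2d_const0)
      next
        case 2 then show ?thesis by (simp add: red_m1 ta)
      next
        case 3 then show ?thesis by (simp add: red_0 t2d_cmult ta mult.assoc)
      next
        case 4 then show ?thesis by (simp add: red_pos tb)
      qed
    qed
    show "chain_solution (reduction a b)"
      unfolding chain_solution_def Let_def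
    proof (intro conjI allI impI)
      fix l x t show "(\<lambda>y. reduction a b l y t) differentiable (at x)" by (rule xdiff_red)
    next
      fix l x show "t2_differentiable (reduction a b l x)" by (rule td)
    next
      fix x t and k :: int assume k: "k > 2"
      show "pdt2 (reduction a b (- k) x) t = (of_int k * reduction a b (- (k + 1)) x t -
          of_int (k - 2) * reduction a b (- (k - 1)) x t + reduction a b (- k) x t * reduction a b 1 x t) *
         pdx (reduction a b) 0 x t + reduction a b 0 x t * reduction a b (- k) x t * pdx (reduction a b) 1 x t +
         reduction a b 0 x t * (pdx (reduction a b) (- (k - 1)) x t + pdx (reduction a b) (- (k + 1)) x t)"
        using k by (simp add: red_le pdt2_const0 pdx_red)
    next
      fix x t
      show "pdt2 (reduction a b (- 2) x) t =
       (reduction a b (- 2) x t * reduction a b 1 x t + 2 * reduction a b (- 3) x t) * pdx (reduction a b) 0 x t +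
       reduction a b 0 x t * reduction a b (- 2) x t * pdx (reduction a b) 1 x t +
       reduction a b 0 x t * pdx (reduction a b) (- 3) x t + 2 * reduction a b 0 x t * pdx (reduction a b) (- 1) x t"
        by (simp add: red_le pdt2_const0 pdx_red)
    next
      fix x t
      show "pdt2 (reduction a b (- 1) x) t =
       (reduction a b (- 1) x t * reduction a b 1 x t + reduction a b (- 2) x t) * pdx (reduction a b) 0 x t +
       reduction a b 0 x t * reduction a b (- 1) x t * pdx (reduction a b) 1 x t +
       reduction a b 0 x t * pdx (reduction a b) (- 2) x t"
        by (simp add: red_le red_m1 red_pos pdx_red e1 power2_eq_square)
    next
      fix x t
      have "pdt2 (reduction a b 0 x) t = (2 * x) * pdt2 a t"
        unfolding red_0 using pdt2_cmult[OF ta, where c="2*x"] by (simp add: mult.assoc)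
      then show "pdt2 (reduction a b 0 x) t =
       reduction a b 0 x t * reduction a b 1 x t * pdx (reduction a b) 0 x t +
       (reduction a b 0 x t)\<^sup>2 * pdx (reduction a b) 1 x t"
        by (simp add: red_0 red_pos pdx_red e1 power2_eq_square)
    next
      fix x t
      show "pdt2 (reduction a b 1 x) t =
       (2 * reduction a b 2 x t - (reduction a b 1 x t)\<^sup>2) * pdx (reduction a b) 0 x t -
       reduction a b 0 x t * reduction a b 1 x t * pdx (reduction a b) 1 x t +
       reduction a b 0 x t * pdx (reduction a b) 2 x t"
        using e3[of 1 t] by (simp add: red_pos pdx_red power2_eq_square algebra_simps numeral_2_eq_2)
    next
      fix x t and k :: int assume k: "k > 1"
      define n where "n = nat k"
      have n: "k = int n" "n > 1" using k by (auto simp: n_def)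
      have r2: "reduction a b (int n + 1) x t = b (n+1) t" using red_pos[of "int n + 1"] n
        by (simp add: nat_add_distrib)
      have r3: "reduction a b (int n - 1) x t = b (n-1) t" using red_pos[of "int n - 1"] n
        by (simp add: nat_diff_distrib)
      have r5: "of_int (int n - 1) = real (n - 1)" using n by (simp add: of_nat_diff)
      show "pdt2 (reduction a b k x) t =
       (of_int (k + 1) * reduction a b (k + 1) x t - of_int (k - 1) * reduction a b (k - 1) x t -
        reduction a b k x t * reduction a b 1 x t) * pdx (reduction a b) 0 x t -
       reduction a b 0 x t * reduction a b k x t * pdx (reduction a b) 1 x t +
       reduction a b 0 x t * (pdx (reduction a b) (k + 1) x t + pdx (reduction a b) (k - 1) x t)"
        using e3[of n t] n r2 r3 r5 by (simp add: red_pos pdx_red algebra_simps)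
    qed
  qed
next
  show "chain_initial (reduction a b) \<longleftrightarrow> a zero_time = 1/2 \<and> (\<forall>k>0. b k zero_time = 2)"
  proof
    assume ci: "chain_initial (reduction a b)"
    have "a zero_time = 1/2" using ci unfolding chain_initial_def by (simp add: red_pt)
    moreover have "b k zero_time = 2" if "k > 0" for k
    proof -
      have "reduction a b (int k) 0 zero_time = 2" using ci that unfolding chain_initial_def by simp
      then show ?thesis using that by (simp add: red_pt)
    qed
    ultimately show "a zero_time = 1/2 \<and> (\<forall>k>0. b k zero_time = 2)" by blast
  next
    assume h: "a zero_time = 1/2 \<and> (\<forall>k>0. b k zero_time = 2)"
    show "chain_initial (reduction a b)"
      unfolding chain_initial_def
    proof (intro allI conjI impI)
      fix x and k :: int assume "k > 0"
      then show "reduction a b k x zero_time = 2" using h by (simp add: red_pt)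
    qed (use h in \<open>auto simp: red_pt\<close>)
  qed
qed

end
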